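(* For all $n^+,n^-\ge0$, the operators $W^+|_{\hbar=1}$ and $W^-|_{\hbar=1}$, restricted to the space of polynomials in $p_k^\pm,q_k$ that are bihomogeneous of bidegree $(n^+,n^-)$, are self-adjoint with respect to the scalar product defined on monomials by $(p_\mu,p_\nu)=\delta_{\mu,\nu}\,\zeta(\mu)$, where for $\mu=(\kappa^+,\kappa^-,\lambda)$, $\lambda=(\ell_1,\ell_2,\dots)$, $$\zeta(\mu)=|\mathrm{Aut}(\kappa^+)|\,|\mathrm{Aut}(\kappa^-)|\,|\mathrm{Aut}(\lambda)|\prod_{j=1}^{\ell(\lambda)}\ell_j$$ and $|\mathrm{Aut}(\nu)|$ denotes the product of the factorials of the multiplicities of the parts of a partition $\nu$. (Equivalently, under $p_\mu\leftrightarrow C_\mu/|C_\mu|$, the scalar product $(C_\mu,C_\nu)=\delta_{\mu\nu}n^+!n^-!|C_\mu|$ on $A_{n^+,n^-}$.)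
   Context: $W^+|_{\hbar=1}=\sum_{i,j\ge1}\big(p_i^{\bar i}p_j^{+}\partial/\partial p_{i+j}^{\bar i}+p_{i+j}^{\bar i}\partial^2/\partial p_i^{\bar i}\partial p_j^{+}\big)+\sum_{i\ge1}\big(i\,p_{2i}^+\partial/\partial q_i+q_i\partial/\partial p_{2i}^+\big)$, where $\bar i$ is $+$ for $i$ even and $-$ for $i$ odd; $W^-$ is obtained from $W^+$ by exchanging $p_k^+\leftrightarrow p_k^-$ for all $k$. Bidegrees: $\mathrm{bdeg}\,p_{2k}^\pm=\mathrm{bdeg}\,q_k=(k,k)$, $\mathrm{bdeg}\,p_{2k+1}^+=(k+1,k)$, $\mathrm{bdeg}\,p_{2k+1}^-=(k,k+1)$. For a triple of partitions $\mu=(\kappa^+,\kappa^-,\lambda)$, $p_\mu=\prod p_{k_i^+}^+\prod p_{k_i^-}^-\prod q_{\ell_i}$. (The algebra $A_{n^+,n^-}$, $C_\mu$, $|C_\mu|$ are as follows: states on $N=N^+\sqcup N^-$ are partitions into singletons and $\{+,-\}$ pairs; transitions are ordered pairs of states; $C_\mu$ is the sum of transitions of type $\mu$, i.e. in the $S(N^+)\times S(N^-)$-orbit labelled by $\mu$, and $|C_\mu|=n^+!n^-!/\zeta(\mu)$ is their number.) *)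

theory Defs
  imports Complex_Main "HOL-Library.Poly_Mapping" "HOL-Library.Groups_Big_Fun"
begin

text \<open>Variables: Pp k = p_k^+, Pm k = p_k^-, Q k = q_k (only k >= 1 are used).\<close>
datatype var = Pp nat | Pm nat | Q nat

fun P :: "bool \<Rightarrow> nat \<Rightarrow> var" where
  "P True k = Pp k" | "P False k = Pm k"

fun var_index :: "var \<Rightarrow> nat" where
  "var_index (Pp k) = k" | "var_index (Pm k) = k" | "var_index (Q k) = k"

type_synonym monomial = "var \<Rightarrow>\<^sub>0 nat"
text \<open>Polynomials: coefficient functions on monomials (finite support imposed where needed).\<close>
type_synonym polyn = "monomial \<Rightarrow> real"

definition pderiv_var :: "var \<Rightarrow> polyn \<Rightarrow> polyn" where
  "pderiv_var v f = (\<lambda>m. real (Poly_Mapping.lookup m v + 1) * f (m + Poly_Mapping.single v 1))"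

definition mult_var :: "var \<Rightarrow> polyn \<Rightarrow> polyn" where
  "mult_var v f = (\<lambda>m. if 0 < Poly_Mapping.lookup m v then f (m - Poly_Mapping.single v 1) else 0)"

text \<open>W^s at hbar = 1; W True = W^+, W False = W^- (obtained by exchanging p^+ and p^-).
  The sign bar-i is + for i even, - for i odd; after the exchange it becomes the opposite.
  For each coefficient only finitely many (i,j) contribute, so Sum_any is the genuine sum.\<close>
definition W :: "bool \<Rightarrow> polyn \<Rightarrow> polyn" where
  "W s f = (\<lambda>m.
     Sum_any (\<lambda>(i,j). if 1 \<le> i \<and> 1 \<le> j then
        (let c = (if even i then s else \<not> s) in
          mult_var (P c i) (mult_var (P s j) (pderiv_var (P c (i+j)) f)) m
        + mult_var (P c (i+j)) (pderiv_var (P c i) (pderiv_var (P s j) f)) m)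
      else 0)
   + Sum_any (\<lambda>i. if 1 \<le> i then
        real i * mult_var (P s (2*i)) (pderiv_var (Q i) f) m
        + mult_var (Q i) (pderiv_var (P s (2*i)) f) m
      else 0))"

fun bdeg_var :: "var \<Rightarrow> nat \<times> nat" where
  "bdeg_var (Pp k) = ((k+1) div 2, k div 2)"
| "bdeg_var (Pm k) = (k div 2, (k+1) div 2)"
| "bdeg_var (Q k) = (k, k)"

definition bdeg :: "monomial \<Rightarrow> nat \<times> nat" where
  "bdeg m = ((\<Sum>v\<in>Poly_Mapping.keys m. Poly_Mapping.lookup m v * fst (bdeg_var v)),
             (\<Sum>v\<in>Poly_Mapping.keys m. Poly_Mapping.lookup m v * snd (bdeg_var v)))"

definition bihom :: "nat \<Rightarrow> nat \<Rightarrow> polyn \<Rightarrow> bool" where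
  "bihom np nm f \<longleftrightarrow> finite {m. f m \<noteq> 0} \<and>
     (\<forall>m. f m \<noteq> 0 \<longrightarrow> (\<forall>v\<in>Poly_Mapping.keys m. 1 \<le> var_index v) \<and> bdeg m = (np, nm))"

fun qweight :: "var \<Rightarrow> nat" where
  "qweight (Q k) = k" | "qweight (Pp k) = 1" | "qweight (Pm k) = 1"

definition zeta :: "monomial \<Rightarrow> real" where
  "zeta m = (\<Prod>v\<in>Poly_Mapping.keys m. fact (Poly_Mapping.lookup m v) * real (qweight v) ^ Poly_Mapping.lookup m v)"

definition sprod :: "polyn \<Rightarrow> polyn \<Rightarrow> real" where
  "sprod f g = Sum_any (\<lambda>m. f m * g m * zeta m)"

end

theory Submission
  imports Defs
begin

abbreviation fin :: "polyn \<Rightarrow> bool" where "fin f \<equiv> finite {m. f m \<noteq> 0}"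
abbreviation e :: "var \<Rightarrow> monomial" where "e v \<equiv> Poly_Mapping.single v 1"

lemma shift_back: "0 < Poly_Mapping.lookup m v \<Longrightarrow> m - e v + e v = m"
  by (rule poly_mapping_eqI) (auto simp: lookup_add lookup_minus lookup_single when_def)

lemma Sum_any_shift:
  fixes h :: "monomial \<Rightarrow> real"
  assumes fh: "finite {m. h m \<noteq> 0}" and z: "\<And>m. Poly_Mapping.lookup m v = 0 \<Longrightarrow> h m = 0"
  shows "Sum_any h = Sum_any (\<lambda>m. h (m + e v))"
proof -
  let ?S = "{m. h m \<noteq> 0}"
  define T where "T = (\<lambda>m. m - e v) ` ?S"
  have fT: "finite T" using fh by (simp add: T_def)
  have sub1: "{m. h (m + e v) \<noteq> 0} \<subseteq> T"
  proof
    fix m assume "m \<in> {m. h (m + e v) \<noteq> 0}"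
    then have "m + e v \<in> ?S" "m = (m + e v) - e v" by auto
    then show "m \<in> T" unfolding T_def by blast
  qed
  have inj: "inj_on (\<lambda>m. m + e v) T" by (auto simp: inj_on_def)
  have sub2: "?S \<subseteq> (\<lambda>m. m + e v) ` T"
  proof
    fix m assume m: "m \<in> ?S"
    then have "0 < Poly_Mapping.lookup m v" using z by (metis mem_Collect_eq neq0_conv)
    then have "(m - e v) + e v = m" by (rule shift_back)
    then show "m \<in> (\<lambda>m. m + e v) ` T" using m unfolding T_def by (metis (mono_tags, lifting) image_eqI)
  qed
  have "Sum_any (\<lambda>m. h (m + e v)) = sum (\<lambda>m. h (m + e v)) T"
    by (rule Sum_any.expand_superset[OF fT sub1])
  also have "\<dots> = sum h ((\<lambda>m. m + e v) ` T)" by (simp only: sum.reindex[OF inj] comp_def)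
  also have "\<dots> = Sum_any h"
    by (rule Sum_any.expand_superset[symmetric]) (use fT sub2 in auto)
  finally show ?thesis by simp
qed

lemma zeta_shift:
  "zeta (m + e v) = zeta m * real (Poly_Mapping.lookup m v + 1) * real (qweight v)"
proof -
  have k: "Poly_Mapping.keys (m + e v) = insert v (Poly_Mapping.keys m)"
    by (auto simp: in_keys_iff lookup_add lookup_single when_def split: if_splits)
  have l: "\<And>u. Poly_Mapping.lookup (m + e v) u = Poly_Mapping.lookup m u + (if u = v then 1 else 0)"
    by (auto simp: lookup_add lookup_single when_def)
  show ?thesis
  proof (cases "v \<in> Poly_Mapping.keys m")
    case True
    let ?F = "\<lambda>u. fact (Poly_Mapping.lookup m u) * real (qweight u) ^ Poly_Mapping.lookup m u"
    let ?G = "\<lambda>u. fact (Poly_Mapping.lookup (m + e v) u) * real (qweight u) ^ Poly_Mapping.lookup (m + e v) u"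
    have "zeta (m + e v) = ?G v * (\<Prod>u\<in>Poly_Mapping.keys m - {v}. ?G u)"
      unfolding zeta_def k using True by (simp add: insert_absorb prod.remove)
    also have "(\<Prod>u\<in>Poly_Mapping.keys m - {v}. ?G u) = (\<Prod>u\<in>Poly_Mapping.keys m - {v}. ?F u)"
      by (intro prod.cong) (auto simp: lookup_add lookup_single when_def)
    also have "?G v = fact (Poly_Mapping.lookup m v + 1) * real (qweight v) ^ (Poly_Mapping.lookup m v + 1)"
      by (simp add: lookup_add)
    also have "fact (Poly_Mapping.lookup m v + 1) * real (qweight v) ^ (Poly_Mapping.lookup m v + 1) * (\<Prod>u\<in>Poly_Mapping.keys m - {v}. ?F u) = ?F v * (\<Prod>u\<in>Poly_Mapping.keys m - {v}. ?F u) * real (Poly_Mapping.lookup m v + 1) * real (qweight v)"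
      by (simp add: algebra_simps)
    also have "?F v * (\<Prod>u\<in>Poly_Mapping.keys m - {v}. ?F u) = zeta m"
      unfolding zeta_def using True by (simp add: prod.remove)
    finally show ?thesis .
  next
    case False
    then have "Poly_Mapping.lookup m v = 0" by (simp add: in_keys_iff)
    moreover have "(\<Prod>u\<in>Poly_Mapping.keys m. fact (Poly_Mapping.lookup (m + e v) u) * real (qweight u) ^ Poly_Mapping.lookup (m + e v) u)
       = zeta m" unfolding zeta_def using False by (intro prod.cong) (auto simp: lookup_add lookup_single when_def)
    moreover have "Poly_Mapping.lookup (m + e v) v = 1" using \<open>Poly_Mapping.lookup m v = 0\<close> by (simp add: lookup_add)
    ultimately show ?thesis unfolding zeta_def k using False by simp
  qed
qed

lemma fin_mult: "fin f \<Longrightarrow> fin (mult_var v f)"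
proof -
  assume f: "fin f"
  have "{m. mult_var v f m \<noteq> 0} \<subseteq> (\<lambda>m. m + e v) ` {m. f m \<noteq> 0}"
  proof
    fix m assume "m \<in> {m. mult_var v f m \<noteq> 0}"
    then have "0 < Poly_Mapping.lookup m v" "f (m - e v) \<noteq> 0"
      by (auto simp: mult_var_def split: if_splits)
    then show "m \<in> (\<lambda>m. m + e v) ` {m. f m \<noteq> 0}"
      using shift_back by (metis (mono_tags, lifting) image_eqI mem_Collect_eq)
  qed
  then show ?thesis using f finite_subset by blast
qed

lemma fin_pd: "fin f \<Longrightarrow> fin (pderiv_var v f)"
proof -
  assume f: "fin f"
  have "{m. pderiv_var v f m \<noteq> 0} \<subseteq> (\<lambda>m. m - e v) ` {m. f m \<noteq> 0}"
  proof
    fix m assume "m \<in> {m. pderiv_var v f m \<noteq> 0}"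
    then have "f (m + e v) \<noteq> 0" by (auto simp: pderiv_var_def)
    moreover have "m = (m + e v) - e v" by simp
    ultimately show "m \<in> (\<lambda>m. m - e v) ` {m. f m \<noteq> 0}" by blast
  qed
  then show ?thesis using f finite_subset by blast
qed

lemma sprod_comm: "sprod f g = sprod g f"
  unfolding sprod_def by (simp add: mult_ac)

lemma sprod_mult:
  assumes f: "fin f"
  shows "sprod (mult_var v f) g = real (qweight v) * sprod f (pderiv_var v g)"
proof -
  define h where "h m = mult_var v f m * g m * zeta m" for m
  have fh: "finite {m. h m \<noteq> 0}"
    by (rule finite_subset[OF _ fin_mult[OF f, of v]]) (auto simp: h_def)
  have z: "\<And>m. Poly_Mapping.lookup m v = 0 \<Longrightarrow> h m = 0" by (simp add: h_def mult_var_def)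
  have "sprod (mult_var v f) g = Sum_any h" by (simp add: sprod_def h_def)
  also have "\<dots> = Sum_any (\<lambda>m. h (m + e v))" by (rule Sum_any_shift[OF fh z])
  also have "\<dots> = Sum_any (\<lambda>m. real (qweight v) * (f m * pderiv_var v g m * zeta m))"
  proof (rule Sum_any.cong)
    fix m
    have "mult_var v f (m + e v) = f m" by (simp add: mult_var_def lookup_add)
    then show "h (m + e v) = real (qweight v) * (f m * pderiv_var v g m * zeta m)"
      using zeta_shift[of m v] by (simp add: h_def pderiv_var_def mult_ac)
  qed
  also have "\<dots> = real (qweight v) * sprod f (pderiv_var v g)"
    unfolding sprod_def
    by (rule Sum_any_right_distrib[symmetric], rule finite_subset[OF _ f]) auto
  finally show ?thesis .
qed

lemma sprod_pd:
  assumes g: "fin g"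
  shows "real (qweight v) * sprod (pderiv_var v f) g = sprod f (mult_var v g)"
  using sprod_mult[OF g, of v f] by (simp add: sprod_comm)

lemma sprod_add_left:
  assumes g: "fin g"
  shows "sprod (\<lambda>m. F1 m + F2 m) g = sprod F1 g + sprod F2 g"
proof -
  have "sprod (\<lambda>m. F1 m + F2 m) g = Sum_any (\<lambda>m. F1 m * g m * zeta m + F2 m * g m * zeta m)"
    unfolding sprod_def by (simp add: algebra_simps)
  also have "\<dots> = sprod F1 g + sprod F2 g" unfolding sprod_def
    by (rule Sum_any.distrib; rule finite_subset[OF _ g]; auto)
  finally show ?thesis .
qed

lemma sprod_sum_left:
  assumes g: "fin g" and K: "finite K"
  shows "sprod (\<lambda>m. \<Sum>k\<in>K. F k m) g = (\<Sum>k\<in>K. sprod (F k) g)"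
  using K
proof (induction K rule: finite_induct)
  case empty
  then show ?case by (simp add: sprod_def)
next
  case (insert x K)
  then show ?case by (simp add: sprod_add_left[OF g])
qed

lemma sprod_scale_left:
  assumes g: "fin g"
  shows "sprod (\<lambda>m. c * F m) g = c * sprod F g"
  unfolding sprod_def
  by (subst Sum_any_right_distrib, rule finite_subset[OF _ g]) (auto simp: mult_ac)

lemma sprod_add_right: "fin f \<Longrightarrow> sprod f (\<lambda>m. F1 m + F2 m) = sprod f F1 + sprod f F2"
  by (metis sprod_add_left sprod_comm)
lemma sprod_sum_right: "fin f \<Longrightarrow> finite K \<Longrightarrow> sprod f (\<lambda>m. \<Sum>k\<in>K. F k m) = (\<Sum>k\<in>K. sprod f (F k))"
  by (subst sprod_comm, subst sprod_sum_left) (auto simp: sprod_comm)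
lemma sprod_scale_right: "fin f \<Longrightarrow> sprod f (\<lambda>m. c * F m) = c * sprod f F"
  by (metis sprod_scale_left sprod_comm)

lemma pd_comm: "pderiv_var a (pderiv_var b h) = pderiv_var b (pderiv_var a h)"
proof (rule ext)
  fix m
  show "pderiv_var a (pderiv_var b h) m = pderiv_var b (pderiv_var a h) m"
    by (cases "a = b") (simp_all add: pderiv_var_def lookup_add lookup_single add_ac)
qed

lemma mult_comm: "mult_var a (mult_var b h) = mult_var b (mult_var a h)"
proof (rule ext)
  fix m
  show "mult_var a (mult_var b h) m = mult_var b (mult_var a h) m"
  proof (cases "a = b")
    case False
    have "m - e a - e b = m - e b - e a" by (simp add: diff_diff_add add.commute)
    then show ?thesis using False
      by (simp add: mult_var_def lookup_minus lookup_single)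
  qed simp
qed

lemma qw_P[simp]: "qweight (P c k) = 1" by (cases c) simp_all
lemma vi_P[simp]: "var_index (P c k) = k" by (cases c) simp_all

lemma adj3:
  assumes f: "fin f" and g: "fin g" and wa: "qweight a = 1" and wb: "qweight b = 1" and wc: "qweight c = 1"
  shows "sprod (\<lambda>m. mult_var a (mult_var b (pderiv_var c f)) m + mult_var c (pderiv_var a (pderiv_var b f)) m) g
       = sprod f (\<lambda>m. mult_var a (mult_var b (pderiv_var c g)) m + mult_var c (pderiv_var a (pderiv_var b g)) m)"
proof -
  have 1: "sprod (mult_var a (mult_var b (pderiv_var c f))) g = sprod f (mult_var c (pderiv_var a (pderiv_var b g)))"
  proof -
    have "sprod (mult_var a (mult_var b (pderiv_var c f))) g = sprod (mult_var b (pderiv_var c f)) (pderiv_var a g)"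
      using sprod_mult[OF fin_mult[OF fin_pd[OF f]], of a b c g] wa by simp
    also have "\<dots> = sprod (pderiv_var c f) (pderiv_var b (pderiv_var a g))"
      using sprod_mult[OF fin_pd[OF f], of b c "pderiv_var a g"] wb by simp
    also have "\<dots> = sprod f (mult_var c (pderiv_var b (pderiv_var a g)))"
      using sprod_pd[OF fin_pd[OF fin_pd[OF g]], of c f b a] wc by simp
    finally show ?thesis by (simp add: pd_comm)
  qed
  have 2: "sprod (mult_var c (pderiv_var a (pderiv_var b f))) g = sprod f (mult_var a (mult_var b (pderiv_var c g)))"
  proof -
    have "sprod (mult_var c (pderiv_var a (pderiv_var b f))) g = sprod (pderiv_var a (pderiv_var b f)) (pderiv_var c g)"
      using sprod_mult[OF fin_pd[OF fin_pd[OF f]], of c a b g] wc by simp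
    also have "\<dots> = sprod (pderiv_var b f) (mult_var a (pderiv_var c g))"
      using sprod_pd[OF fin_pd[OF g], of a "pderiv_var b f" c] wa by simp
    also have "\<dots> = sprod f (mult_var b (mult_var a (pderiv_var c g)))"
      using sprod_pd[OF fin_mult[OF fin_pd[OF g]], of b f a c] wb by simp
    finally show ?thesis by (simp add: mult_comm)
  qed
  show ?thesis
    using sprod_add_left[OF g] sprod_add_right[OF f] 1 2 by simp
qed

lemma adjU:
  assumes f: "fin f" and g: "fin g" and wp: "qweight p = 1" and wq: "qweight q = i"
  shows "sprod (\<lambda>m. real i * mult_var p (pderiv_var q f) m + mult_var q (pderiv_var p f) m) g
       = sprod f (\<lambda>m. real i * mult_var p (pderiv_var q g) m + mult_var q (pderiv_var p g) m)"
proof -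
  have 1: "real i * sprod (mult_var p (pderiv_var q f)) g = sprod f (mult_var q (pderiv_var p g))"
    using sprod_mult[OF fin_pd[OF f], of p q g] sprod_pd[OF fin_pd[OF g], of q f p] wp wq by simp
  have 2: "sprod (mult_var q (pderiv_var p f)) g = real i * sprod f (mult_var p (pderiv_var q g))"
    using sprod_mult[OF fin_pd[OF f], of q p g] sprod_pd[OF fin_pd[OF g], of p f q] wp wq by simp
  show ?thesis
    using sprod_add_left[OF g] sprod_add_right[OF f] sprod_scale_left[OF g] sprod_scale_right[OF f] 1 2
    by simp
qed

definition Tt :: "bool \<Rightarrow> nat \<Rightarrow> nat \<Rightarrow> polyn \<Rightarrow> polyn" where
  "Tt s i j f = (\<lambda>m. let c = (if even i then s else \<not> s) in
          mult_var (P c i) (mult_var (P s j) (pderiv_var (P c (i+j)) f)) m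
        + mult_var (P c (i+j)) (pderiv_var (P c i) (pderiv_var (P s j) f)) m)"

definition Uu :: "bool \<Rightarrow> nat \<Rightarrow> polyn \<Rightarrow> polyn" where
  "Uu s i f = (\<lambda>m. real i * mult_var (P s (2*i)) (pderiv_var (Q i) f) m
        + mult_var (Q i) (pderiv_var (P s (2*i)) f) m)"

lemma W_alt: "W s f m = Sum_any (\<lambda>(i,j). if 1 \<le> i \<and> 1 \<le> j then Tt s i j f m else 0)
   + Sum_any (\<lambda>i. if 1 \<le> i then Uu s i f m else 0)"
  unfolding W_def Tt_def Uu_def by (rule refl)

lemma Tt_adj: "fin f \<Longrightarrow> fin g \<Longrightarrow> sprod (Tt s i j f) g = sprod f (Tt s i j g)"
  unfolding Tt_def Let_def by (rule adj3) auto

lemma Uu_adj: "fin f \<Longrightarrow> fin g \<Longrightarrow> sprod (Uu s i f) g = sprod f (Uu s i g)"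
  unfolding Uu_def by (rule adjU) auto

definition MN :: "nat \<Rightarrow> monomial set" where
  "MN N = {m. \<forall>v\<in>Poly_Mapping.keys m. var_index v \<le> N}"

lemma mult_nz: "mult_var a X m \<noteq> 0 \<Longrightarrow> X (m - e a) \<noteq> 0 \<and> 0 < Poly_Mapping.lookup m a"
  by (auto simp: mult_var_def split: if_splits)

lemma pd_nz: "pderiv_var c X m \<noteq> 0 \<Longrightarrow> X (m + e c) \<noteq> 0"
  by (auto simp: pderiv_var_def)

lemma in_MN_key: "m \<in> MN N \<Longrightarrow> 0 < Poly_Mapping.lookup m c \<Longrightarrow> var_index c \<le> N"
  by (auto simp: MN_def in_keys_iff)

lemma supp_key: "\<forall>m. f m \<noteq> 0 \<longrightarrow> m \<in> MN N \<Longrightarrow> f (m + e c) \<noteq> 0 \<Longrightarrow> var_index c \<le> N"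
  by (rule in_MN_key[of "m + e c"]) (auto simp: lookup_add)

lemma Tt_zero:
  assumes sf: "\<forall>m. f m \<noteq> 0 \<longrightarrow> m \<in> MN N" and m: "m \<in> MN N" and nz: "Tt s i j f m \<noteq> 0"
  shows "i + j \<le> N"
proof -
  define c where "c = (if even i then s else \<not> s)"
  have "mult_var (P c i) (mult_var (P s j) (pderiv_var (P c (i+j)) f)) m \<noteq> 0
      \<or> mult_var (P c (i+j)) (pderiv_var (P c i) (pderiv_var (P s j) f)) m \<noteq> 0"
    using nz by (auto simp: Tt_def c_def Let_def)
  then show ?thesis
  proof
    assume "mult_var (P c i) (mult_var (P s j) (pderiv_var (P c (i+j)) f)) m \<noteq> 0"
    then have "pderiv_var (P c (i+j)) f (m - e (P c i) - e (P s j)) \<noteq> 0"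
      using mult_nz by blast
    then have "f (m - e (P c i) - e (P s j) + e (P c (i+j))) \<noteq> 0" by (rule pd_nz)
    from supp_key[OF sf this] show ?thesis by simp
  next
    assume "mult_var (P c (i+j)) (pderiv_var (P c i) (pderiv_var (P s j) f)) m \<noteq> 0"
    then have "0 < Poly_Mapping.lookup m (P c (i+j))" using mult_nz by blast
    from in_MN_key[OF m this] show ?thesis by simp
  qed
qed

lemma Uu_zero:
  assumes sf: "\<forall>m. f m \<noteq> 0 \<longrightarrow> m \<in> MN N" and m: "m \<in> MN N" and nz: "Uu s i f m \<noteq> 0"
  shows "i \<le> N"
proof -
  have "mult_var (P s (2*i)) (pderiv_var (Q i) f) m \<noteq> 0
      \<or> mult_var (Q i) (pderiv_var (P s (2*i)) f) m \<noteq> 0"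
    using nz by (auto simp: Uu_def)
  then show ?thesis
  proof
    assume "mult_var (P s (2*i)) (pderiv_var (Q i) f) m \<noteq> 0"
    then have "pderiv_var (Q i) f (m - e (P s (2*i))) \<noteq> 0"
      using mult_nz by blast
    then have "f (m - e (P s (2*i)) + e (Q i)) \<noteq> 0" by (rule pd_nz)
    from supp_key[OF sf this] show ?thesis by simp
  next
    assume "mult_var (Q i) (pderiv_var (P s (2*i)) f) m \<noteq> 0"
    then have "0 < Poly_Mapping.lookup m (Q i)" using mult_nz by blast
    from in_MN_key[OF m this] show ?thesis by simp
  qed
qed

lemma W_fin:
  assumes sf: "\<forall>m. f m \<noteq> 0 \<longrightarrow> m \<in> MN N" and m: "m \<in> MN N"
  shows "W s f m = (\<Sum>k\<in>{1..N}\<times>{1..N}. Tt s (fst k) (snd k) f m) + (\<Sum>i\<in>{1..N}. Uu s i f m)"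
proof -
  have A: "Sum_any (\<lambda>(i,j). if 1 \<le> i \<and> 1 \<le> j then Tt s i j f m else 0)
     = (\<Sum>k\<in>{1..N}\<times>{1..N}. (\<lambda>(i,j). if 1 \<le> i \<and> 1 \<le> j then Tt s i j f m else 0) k)"
  proof (rule Sum_any.expand_superset)
    show "{a. (case a of (i, j) \<Rightarrow> if 1 \<le> i \<and> 1 \<le> j then Tt s i j f m else 0) \<noteq> 0} \<subseteq> {1..N} \<times> {1..N}"
      using Tt_zero[OF sf m] by (force split: if_splits)
  qed simp
  have A2: "(\<Sum>k\<in>{1..N}\<times>{1..N}. (\<lambda>(i,j). if 1 \<le> i \<and> 1 \<le> j then Tt s i j f m else 0) k)
     = (\<Sum>k\<in>{1..N}\<times>{1..N}. Tt s (fst k) (snd k) f m)"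
    by (rule sum.cong) auto
  have B: "Sum_any (\<lambda>i. if 1 \<le> i then Uu s i f m else 0)
     = (\<Sum>i\<in>{1..N}. if 1 \<le> i then Uu s i f m else 0)"
  proof (rule Sum_any.expand_superset)
    show "{a. (if 1 \<le> a then Uu s a f m else 0) \<noteq> 0} \<subseteq> {1..N}"
      using Uu_zero[OF sf m] by (force split: if_splits)
  qed simp
  have B2: "(\<Sum>i\<in>{1..N}. if 1 \<le> i then Uu s i f m else 0) = (\<Sum>i\<in>{1..N}. Uu s i f m)"
    by (rule sum.cong) auto
  show ?thesis using W_alt[of s f m] A A2 B B2 by simp
qed

lemma W_sa:
  assumes f: "fin f" and g: "fin g"
    and sf: "\<forall>m. f m \<noteq> 0 \<longrightarrow> m \<in> MN N" and sg: "\<forall>m. g m \<noteq> 0 \<longrightarrow> m \<in> MN N"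
  shows "sprod (W s f) g = sprod f (W s g)"
proof -
  let ?K = "{1..N}\<times>{1..N}" and ?I = "{1..N::nat}"
  have "sprod (W s f) g = sprod (\<lambda>m. (\<Sum>k\<in>?K. Tt s (fst k) (snd k) f m) + (\<Sum>i\<in>?I. Uu s i f m)) g"
    unfolding sprod_def
  proof (rule Sum_any.cong)
    fix m show "W s f m * g m * zeta m = ((\<Sum>k\<in>?K. Tt s (fst k) (snd k) f m) + (\<Sum>i\<in>?I. Uu s i f m)) * g m * zeta m"
      using W_fin[OF sf, of m s] sg by (cases "g m = 0") auto
  qed
  also have "\<dots> = (\<Sum>k\<in>?K. sprod (Tt s (fst k) (snd k) f) g) + (\<Sum>i\<in>?I. sprod (Uu s i f) g)"
    by (simp add: sprod_add_left[OF g] sprod_sum_left[OF g])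
  also have "\<dots> = (\<Sum>k\<in>?K. sprod f (Tt s (fst k) (snd k) g)) + (\<Sum>i\<in>?I. sprod f (Uu s i g))"
    by (simp add: Tt_adj[OF f g] Uu_adj[OF f g])
  also have "\<dots> = sprod f (\<lambda>m. (\<Sum>k\<in>?K. Tt s (fst k) (snd k) g m) + (\<Sum>i\<in>?I. Uu s i g m))"
    by (simp add: sprod_add_right[OF f] sprod_sum_right[OF f])
  also have "\<dots> = sprod f (W s g)"
    unfolding sprod_def
  proof (rule Sum_any.cong)
    fix m show "f m * ((\<Sum>k\<in>?K. Tt s (fst k) (snd k) g m) + (\<Sum>i\<in>?I. Uu s i g m)) * zeta m = f m * W s g m * zeta m"
      using W_fin[OF sg, of m s] sf by (cases "f m = 0") auto
  qed
  finally show ?thesis .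
qed

theorem proposition4p5:
  fixes np nm :: nat and f g :: polyn
  assumes "bihom np nm f" and "bihom np nm g"
  shows "sprod (W True f) g = sprod f (W True g) \<and>
         sprod (W False f) g = sprod f (W False g)"
proof -
  have f: "fin f" and g: "fin g" using assms by (auto simp: bihom_def)
  define S where "S = {m. f m \<noteq> 0} \<union> {m. g m \<noteq> 0}"
  have fS: "finite S" using f g by (simp add: S_def)
  define V where "V = var_index ` (\<Union>m\<in>S. Poly_Mapping.keys m)"
  have fV: "finite V" using fS by (simp add: V_def)
  define N where "N = Max V"
  have inMN: "m \<in> MN N" if "m \<in> S" for m
    unfolding MN_def N_def using that fV by (auto simp: V_def intro!: Max_ge)
  have sf: "\<forall>m. f m \<noteq> 0 \<longrightarrow> m \<in> MN N" and sg: "\<forall>m. g m \<noteq> 0 \<longrightarrow> m \<in> MN N"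
    using inMN by (auto simp: S_def)
  show ?thesis using W_sa[OF f g sf sg] by simp
qed

end
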